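(* Let $(\lambda,\mu,\mu')$ be an admissible triplet and let $\mu^*,\mu'^*$ be the associated weights. Then $\langle\lambda+\mu'^*,\alpha_j^\vee\rangle\ge0$ for every $j\in\{1,\dots,n-1\}$, i.e. $\lambda_j-\lambda_{j+1}+\mu'^*_j-\mu'^*_{j+1}\ge0$.
   Context: Type $D_n$ weights are $(\lambda_1,\dots,\lambda_n)$; $\langle\lambda,\alpha_j^\vee\rangle=\lambda_j-\lambda_{j+1}$ for $j<n$ and $\langle\lambda,\alpha_n^\vee\rangle=\lambda_{n-1}+\lambda_n$; $P_+=\{\lambda_j\in\frac12\mathbb Z,\lambda_j-\lambda_k\in\mathbb Z,\lambda_1\ge\dots\ge\lambda_n,\lambda_{n-1}+\lambda_n\ge0\}$; $P[S]=\{(\pm\frac12,\dots,\pm\frac12)\}$. For $k\ge0$, $\Delta^k$ is the set of sums $\mu_1+\dots+\mu_k$ over tuples $(\mu_1,\dots,\mu_k)\in P[S]^k$ all of whose partial sums lie in $P_+$ ($\Delta^0=\{0\}$). A triplet $(\lambda,\mu,\mu')$ is admissible if $\lambda\in\Delta^k$ for some $k\ge0$, $\mu,\mu'\in P[S]$, and $\lambda+\mu,\ \lambda+\mu+\mu'\in P_+$. A free interval of the triplet is a subset $\mathrm{Fr}\subset\{1,\dots,n\}$, maximal with respect to inclusion, such that $\lambda_j$ is constant on $\mathrm{Fr}$ and $\mu_j\mu'_j<0$ for all $j\in\mathrm{Fr}$. The weights $\mu^*,\mu'^*\in P[S]$ are defined as follows: outside all free intervals they agree with $\mu,\mu'$;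 on each free interval $\mathrm{Fr}$, with $b=|\{j\in\mathrm{Fr}:\mu'_j=+\frac12\}|$, $\mu'^*_j=+\frac12$ for the $b$ smallest elements $j$ of $\mathrm{Fr}$ and $\mu'^*_j=-\frac12$ for the remaining elements of $\mathrm{Fr}$, and $\mu^*_j=-\mu'^*_j$ for $j\in\mathrm{Fr}$. (Equivalently, $b_{\mu'^*}$, $b_{\mu^*}$ are obtained from $b_{\mu'}$, $b_\mu$ in the spinor crystal by moving, within each free interval, the $+$'s of $\mu'$ (resp. the $-$'s of $\mu$) leftward across the other signs by crystal operators.) *)

theory Defs
  imports Main "HOL.Real"
begin

text \<open>Weights of type D_n are modelled as functions nat => real, with
  coordinates indexed by 1..n and (for spin weights / their sums) zero elsewhere.\<close>

definition dominant :: "nat \<Rightarrow> (nat \<Rightarrow> real) \<Rightarrow> bool" where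
  "dominant n l \<longleftrightarrow>
     (\<forall>j\<in>{1..n}. 2 * l j \<in> \<int>) \<and>
     (\<forall>j\<in>{1..n}. \<forall>k\<in>{1..n}. l j - l k \<in> \<int>) \<and>
     (\<forall>j\<in>{1..<n}. l j \<ge> l (j+1)) \<and>
     l (n-1) + l n \<ge> 0"

definition spin_weight :: "nat \<Rightarrow> (nat \<Rightarrow> real) \<Rightarrow> bool" where
  "spin_weight n m \<longleftrightarrow>
     (\<forall>j\<in>{1..n}. m j = 1/2 \<or> m j = -1/2) \<and> (\<forall>j. j \<notin> {1..n} \<longrightarrow> m j = 0)"

definition Delta :: "nat \<Rightarrow> nat \<Rightarrow> (nat \<Rightarrow> real) set" where
  "Delta n k = {l. \<exists>ms :: nat \<Rightarrow> nat \<Rightarrow> real.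
      (\<forall>i<k. spin_weight n (ms i)) \<and>
      (\<forall>m\<in>{1..k}. dominant n (\<lambda>j. \<Sum>i<m. ms i j)) \<and>
      l = (\<lambda>j. \<Sum>i<k. ms i j)}"

definition admissible :: "nat \<Rightarrow> (nat \<Rightarrow> real) \<Rightarrow> (nat \<Rightarrow> real) \<Rightarrow> (nat \<Rightarrow> real) \<Rightarrow> bool" where
  "admissible n l m m' \<longleftrightarrow>
     (\<exists>k. l \<in> Delta n k) \<and> spin_weight n m \<and> spin_weight n m' \<and>
     dominant n (\<lambda>j. l j + m j) \<and> dominant n (\<lambda>j. l j + m j + m' j)"

definition free_cond :: "(nat \<Rightarrow> real) \<Rightarrow> (nat \<Rightarrow> real) \<Rightarrow> (nat \<Rightarrow> real) \<Rightarrow> nat set \<Rightarrow> bool" where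
  "free_cond l m m' F \<longleftrightarrow> (\<forall>i\<in>F. \<forall>j\<in>F. l i = l j) \<and> (\<forall>j\<in>F. m j * m' j < 0)"

definition free_interval :: "nat \<Rightarrow> (nat \<Rightarrow> real) \<Rightarrow> (nat \<Rightarrow> real) \<Rightarrow> (nat \<Rightarrow> real) \<Rightarrow> nat set \<Rightarrow> bool" where
  "free_interval n l m m' F \<longleftrightarrow>
     F \<subseteq> {1..n} \<and> free_cond l m m' F \<and>
     (\<forall>G. G \<subseteq> {1..n} \<and> free_cond l m m' G \<and> F \<subseteq> G \<longrightarrow> G = F)"

definition mu'_star :: "nat \<Rightarrow> (nat \<Rightarrow> real) \<Rightarrow> (nat \<Rightarrow> real) \<Rightarrow> (nat \<Rightarrow> real) \<Rightarrow> nat \<Rightarrow> real" where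
  "mu'_star n l m m' j =
     (if \<exists>F. free_interval n l m m' F \<and> j \<in> F then
        (let F = (SOME F. free_interval n l m m' F \<and> j \<in> F);
             b = card {i\<in>F. m' i = 1/2}
         in if card {i\<in>F. i < j} < b then 1/2 else -1/2)
      else m' j)"

definition mu_star :: "nat \<Rightarrow> (nat \<Rightarrow> real) \<Rightarrow> (nat \<Rightarrow> real) \<Rightarrow> (nat \<Rightarrow> real) \<Rightarrow> nat \<Rightarrow> real" where
  "mu_star n l m m' j =
     (if \<exists>F. free_interval n l m m' F \<and> j \<in> F then - mu'_star n l m m' j else m j)"

end

theory Submission
  imports Defs
begin

definition FC :: "nat \<Rightarrow> (nat \<Rightarrow> real) \<Rightarrow> (nat \<Rightarrow> real) \<Rightarrow> (nat \<Rightarrow> real) \<Rightarrow> real \<Rightarrow> nat set" where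
  "FC n l m m' c = {i \<in> {1..n}. l i = c \<and> m i * m' i < 0}"

lemma FC_free:
  assumes "j \<in> FC n l m m' c"
  shows "free_interval n l m m' (FC n l m m' c)"
proof -
  have "c = l j" using assms by (auto simp: FC_def)
  show ?thesis unfolding free_interval_def
  proof (intro conjI allI impI)
    show "FC n l m m' c \<subseteq> {1..n}" by (auto simp: FC_def)
    show "free_cond l m m' (FC n l m m' c)" by (auto simp: FC_def free_cond_def)
    fix G assume G: "G \<subseteq> {1..n} \<and> free_cond l m m' G \<and> FC n l m m' c \<subseteq> G"
    then have G1: "G \<subseteq> {1..n}" and G2: "free_cond l m m' G" and G3: "FC n l m m' c \<subseteq> G"
      by auto
    have "j \<in> G" using assms G3 by blast
    have "G \<subseteq> FC n l m m' c"
    proof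
      fix i assume i: "i \<in> G"
      have "i \<in> {1..n}" using i G1 by blast
      moreover have "l i = c" using G2 i \<open>j \<in> G\<close> \<open>c = l j\<close> unfolding free_cond_def by blast
      moreover have "m i * m' i < 0" using G2 i unfolding free_cond_def by blast
      ultimately show "i \<in> FC n l m m' c" unfolding FC_def by blast
    qed
    then show "G = FC n l m m' c" using G3 by (rule subset_antisym)
  qed
qed

lemma free_char:
  "(free_interval n l m m' F \<and> j \<in> F) \<longleftrightarrow> (F = FC n l m m' (l j) \<and> j \<in> FC n l m m' (l j))"
proof
  assume A: "free_interval n l m m' F \<and> j \<in> F"
  have F1: "F \<subseteq> {1..n}" and F2: "free_cond l m m' F"
    and F3: "\<forall>G. G \<subseteq> {1..n} \<and> free_cond l m m' G \<and> F \<subseteq> G \<longrightarrow> G = F"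
    using A unfolding free_interval_def by blast+
  have jF: "j \<in> F" using A by blast
  have sub: "F \<subseteq> FC n l m m' (l j)"
  proof
    fix i assume i: "i \<in> F"
    have "i \<in> {1..n}" using i F1 by blast
    moreover have "l i = l j" using F2 i jF unfolding free_cond_def by blast
    moreover have "m i * m' i < 0" using F2 i unfolding free_cond_def by blast
    ultimately show "i \<in> FC n l m m' (l j)" unfolding FC_def by blast
  qed
  have jin: "j \<in> FC n l m m' (l j)" using sub jF by blast
  have "FC n l m m' (l j) \<subseteq> {1..n}" "free_cond l m m' (FC n l m m' (l j))"
    unfolding FC_def free_cond_def by auto
  then have "FC n l m m' (l j) = F" using F3 sub by blast
  then show "F = FC n l m m' (l j) \<and> j \<in> FC n l m m' (l j)" using jin by simp
next
  assume "F = FC n l m m' (l j) \<and> j \<in> FC n l m m' (l j)"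
  then show "free_interval n l m m' F \<and> j \<in> F" using FC_free by metis
qed

lemma some_FC:
  assumes "j \<in> FC n l m m' (l j)"
  shows "(SOME F. free_interval n l m m' F \<and> j \<in> F) = FC n l m m' (l j)"
proof (rule some_equality)
  show "free_interval n l m m' (FC n l m m' (l j)) \<and> j \<in> FC n l m m' (l j)"
    using assms free_char by blast
  fix F assume "free_interval n l m m' F \<and> j \<in> F"
  then show "F = FC n l m m' (l j)" using free_char by blast
qed

lemma mu'_star_eq:
  "mu'_star n l m m' j =
     (if j \<in> FC n l m m' (l j) then
        (if card {i\<in>FC n l m m' (l j). i < j} < card {i\<in>FC n l m m' (l j). m' i = 1/2} then 1/2 else -1/2)
      else m' j)"
proof (cases "j \<in> FC n l m m' (l j)")
  case True
  then have ex: "\<exists>F. free_interval n l m m' F \<and> j \<in> F" using free_char by blast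
  show ?thesis unfolding mu'_star_def using ex some_FC[OF True] True by (simp only: Let_def if_True)
next
  case False
  then have ex: "\<not> (\<exists>F. free_interval n l m m' F \<and> j \<in> F)" using free_char by blast
  show ?thesis unfolding mu'_star_def using ex False by (simp only: if_False)
qed

theorem proposition6p4:
  fixes n :: nat and l m m' :: "nat \<Rightarrow> real"
  assumes "n \<ge> 2"
    and "admissible n l m m'"
  shows "\<forall>j\<in>{1..<n}. l j - l (j+1) + mu'_star n l m m' j - mu'_star n l m m' (j+1) \<ge> 0"
proof
  fix j assume j: "j \<in> {1..<n}"
  obtain k where lk: "l \<in> Delta n k" and sm: "spin_weight n m" and sm': "spin_weight n m'"
    and d1: "dominant n (\<lambda>j. l j + m j)" and d2: "dominant n (\<lambda>j. l j + m j + m' j)"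
    using assms(2) unfolding admissible_def by blast
  have lmono: "l j \<ge> l (j+1) \<and> l j - l (j+1) \<in> \<int>"
  proof (cases "k = 0")
    case True
    then show ?thesis using lk by (auto simp: Delta_def)
  next
    case False
    then obtain ms where "\<forall>m\<in>{1..k}. dominant n (\<lambda>j. \<Sum>i<m. ms i j)" "l = (\<lambda>j. \<Sum>i<k. ms i j)"
      using lk by (auto simp: Delta_def)
    then have "dominant n l" using False by auto
    then show ?thesis using j unfolding dominant_def by auto
  qed
  then obtain z :: int where z: "l j - l (j+1) = of_int z" by (metis Ints_cases)
  have j1: "j \<in> {1..n}" "j+1 \<in> {1..n}" using j by auto
  have mj: "m j = 1/2 \<or> m j = -1/2" "m (j+1) = 1/2 \<or> m (j+1) = -1/2"
    "m' j = 1/2 \<or> m' j = -1/2" "m' (j+1) = 1/2 \<or> m' (j+1) = -1/2"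
    using sm sm' j1 unfolding spin_weight_def by blast+
  have dd1: "l j + m j \<ge> l (j+1) + m (j+1)" using d1 j unfolding dominant_def by auto
  have dd2: "l j + m j + m' j \<ge> l (j+1) + m (j+1) + m' (j+1)" using d2 j unfolding dominant_def by auto
  let ?s = "mu'_star n l m m'"
  have pm: "?s i = 1/2 \<or> ?s i = -1/2" if "i \<in> {1..n}" for i
    using sm' that unfolding mu'_star_eq spin_weight_def by auto
  show "l j - l (j+1) + ?s j - ?s (j+1) \<ge> 0"
  proof (cases "z = 0")
    case False
    then have "z \<ge> 1" using lmono z by linarith
    then have "l j - l (j+1) \<ge> 1" using z by simp
    then show ?thesis using pm[OF j1(1)] pm[OF j1(2)] by auto
  next
    case True
    then have eq: "l (j+1) = l j" using z by simp
    let ?F = "FC n l m m' (l j)"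
    have fin: "finite ?F" by (simp add: FC_def)
    have inF: "i \<in> ?F \<longleftrightarrow> m i * m' i < 0" if "i \<in> {1..n}" "l i = l j" for i
      using that by (auto simp: FC_def)
    have "?s j \<ge> ?s (j+1)"
    proof (cases "j \<in> ?F")
      case jF: True
      show ?thesis
      proof (cases "j+1 \<in> ?F")
        case True
        have "card {i\<in>?F. i < j} \<le> card {i\<in>?F. i < j+1}"
          by (rule card_mono) (use fin in auto)
        then show ?thesis using jF True unfolding mu'_star_eq eq by auto
      next
        case False
        then have "m (j+1) * m' (j+1) \<ge> 0" using inF[OF j1(2)] eq by auto
        moreover have "m j * m' j < 0" using jF inF[OF j1(1)] by auto
        ultimately have "m' (j+1) = -1/2" using dd1 dd2 eq by (insert mj, elim disjE, simp_all)
        then have "?s (j+1) = -1/2" using False unfolding mu'_star_eq eq by auto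
        then show ?thesis using pm[OF j1(1)] by auto
      qed
    next
      case jF: False
      then have a: "m j * m' j \<ge> 0" using inF[OF j1(1)] by auto
      show ?thesis
      proof (cases "j+1 \<in> ?F")
        case True
        then have "m (j+1) * m' (j+1) < 0" using inF[OF j1(2)] eq by auto
        then have "m' j = 1/2" using a dd1 dd2 eq by (insert mj, elim disjE, simp_all)
        then have "?s j = 1/2" using jF unfolding mu'_star_eq by auto
        then show ?thesis using pm[OF j1(2)] by auto
      next
        case False
        then have "m (j+1) * m' (j+1) \<ge> 0" using inF[OF j1(2)] eq by auto
        then have "m' j \<ge> m' (j+1)" using a dd1 dd2 eq by (insert mj, elim disjE, simp_all)
        then show ?thesis using jF False unfolding mu'_star_eq eq by auto
      qed
    qed
    then show ?thesis using eq by simp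
  qed
qed

end
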